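(* In the setting of the context, let $\mu^*\in W_1$. Given $n\ge1$ and $\alpha\in\mathcal{I}_n(f_{\mu^*})$, there exist $c=c(\alpha)>0$ and $\delta=\delta(\alpha)>0$ such that for every $\mu$ with $\|\mu-\mu^*\|<\delta$ (and $\|\mu-\mu^*\|<1$) we have $\alpha\in\mathcal{I}_n(f_\mu)$ and $d_H(A^\alpha_\mu,A^\alpha_{\mu^*})\le c\|\mu-\mu^*\|$.
   Context: $X\subset\mathbb{R}^d$ is a compact convex polytope (possibly not full-dimensional) with relative interior $\mathrm{relint}(X)$. $\ell\ge1$, $\mathcal{A}=\{-1,1\}^\ell$, $\varphi_i(x)=\Lambda_ix+b_i$ ($i\in\mathcal{A}$) with $\Lambda_i\in GL_d(\mathbb{R})$, $\|\Lambda_i\|<1$ in some operator norm, and $\varphi_i(X)\subset\mathrm{relint}(X)$. $v^{(1)},\dots,v^{(\ell)}$ are unit vectors in $\mathbb{R}^d$, $H_j(\mu)=\{x:\langle v^{(j)},x\rangle=\mu_j\}$. Label map: $\sigma_\mu(x)=(s_1(x),\dots,s_\ell(x))$, $s_j(x)=-1$ if $\langle v^{(j)},x\rangle\le\mu_j$ and $1$ otherwise; $f_\mu(x)=\varphi_{\sigma_\mu(x)}(x)$ on $X$. $A_{i,\mu}=\mathrm{relint}(X)\cap\mathrm{relint}(\{x\in X:\sigma_\mu(x)=i\})$. For $\alpha=(i_0,\dots,i_{n-1})$: $A^\alpha_\mu=A_{i_0,\mu}\cap\varphi_{i_0}^{-1}(A_{i_1,\mu})\cap\cdots\cap(\varphi_{i_{n-2}}\circ\cdots\circ\varphi_{i_0})^{-1}(A_{i_{n-1},\mu})$.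 $\mathcal{I}_n(f_\mu)=\{\alpha\in\mathcal{A}^n:A^\alpha_\mu\ne\emptyset\}$ (the itineraries of order $n$). $Z_\alpha=\{\mu\in\mathbb{R}^\ell:A^\alpha_\mu\neq\emptyset\}$ and $W_1=\mathbb{R}^\ell\setminus\bigcup_{n\ge1}\bigcup_{\alpha\in\mathcal{A}^n}\partial Z_\alpha$. $d_H$ is the Hausdorff distance (with respect to the Euclidean metric). *)

theory Defs
  imports "HOL-Analysis.Analysis"
begin

definition labels :: "('l \<Rightarrow> int) set" where
  "labels = {i. \<forall>j. i j \<in> {-1, 1}}"

definition is_norm_fun :: "('a::real_vector \<Rightarrow> real) \<Rightarrow> bool" where
  "is_norm_fun N \<longleftrightarrow> (\<forall>x. 0 \<le> N x) \<and> (\<forall>x. N x = 0 \<longleftrightarrow> x = 0)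
     \<and> (\<forall>c x. N (c *\<^sub>R x) = \<bar>c\<bar> * N x) \<and> (\<forall>x y. N (x + y) \<le> N x + N y)"

definition sigma :: "('l \<Rightarrow> 'a::real_inner) \<Rightarrow> real^'l::finite \<Rightarrow> 'a \<Rightarrow> ('l \<Rightarrow> int)" where
  "sigma v \<mu> x = (\<lambda>j. if v j \<bullet> x \<le> \<mu> $ j then -1 else 1)"

definition phi :: "(('l \<Rightarrow> int) \<Rightarrow> 'a \<Rightarrow> 'a) \<Rightarrow> (('l \<Rightarrow> int) \<Rightarrow> 'a::real_vector) \<Rightarrow> ('l \<Rightarrow> int) \<Rightarrow> 'a \<Rightarrow> 'a" where
  "phi Lam b i x = Lam i x + b i"

definition fmap where
  "fmap Lam b v \<mu> x = phi Lam b (sigma v \<mu> x) x"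

definition Aset :: "'a::euclidean_space set \<Rightarrow> ('l \<Rightarrow> 'a) \<Rightarrow> ('l \<Rightarrow> int) \<Rightarrow> real^'l::finite \<Rightarrow> 'a set" where
  "Aset X v i \<mu> = rel_interior X \<inter> rel_interior {x \<in> X. sigma v \<mu> x = i}"

fun cyl :: "'a::euclidean_space set \<Rightarrow> (('l \<Rightarrow> int) \<Rightarrow> 'a \<Rightarrow> 'a) \<Rightarrow> (('l \<Rightarrow> int) \<Rightarrow> 'a)
     \<Rightarrow> ('l \<Rightarrow> 'a) \<Rightarrow> ('l \<Rightarrow> int) list \<Rightarrow> real^'l::finite \<Rightarrow> 'a set" where
  "cyl X Lam b v [] \<mu> = UNIV"
| "cyl X Lam b v (i # \<alpha>) \<mu> = Aset X v i \<mu> \<inter> {x. phi Lam b i x \<in> cyl X Lam b v \<alpha> \<mu>}"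

definition itineraries where
  "itineraries X Lam b v n \<mu> =
     {\<alpha>. length \<alpha> = n \<and> set \<alpha> \<subseteq> labels \<and> cyl X Lam b v \<alpha> \<mu> \<noteq> {}}"

definition Zset where
  "Zset X Lam b v \<alpha> = {\<mu>. cyl X Lam b v \<alpha> \<mu> \<noteq> {}}"

definition W1 :: "'a::euclidean_space set \<Rightarrow> (('l \<Rightarrow> int) \<Rightarrow> 'a \<Rightarrow> 'a) \<Rightarrow> (('l \<Rightarrow> int) \<Rightarrow> 'a)
     \<Rightarrow> ('l \<Rightarrow> 'a) \<Rightarrow> (real^'l::finite) set" where
  "W1 X Lam b v = UNIV - (\<Union>n\<in>{1..}. \<Union>\<alpha>\<in>{\<alpha>. length \<alpha> = n \<and> set \<alpha> \<subseteq> labels}.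
                          frontier (Zset X Lam b v \<alpha>))"

definition hausdorff_dist :: "'a::metric_space set \<Rightarrow> 'a set \<Rightarrow> real" where
  "hausdorff_dist A B = max (SUP a\<in>A. infdist a B) (SUP b\<in>B. infdist b A)"

end

theory Submission
  imports Defs
begin

definition Cset :: "'a::euclidean_space set \<Rightarrow> ('l \<Rightarrow> 'a) \<Rightarrow> ('l \<Rightarrow> int) \<Rightarrow> real^'l::finite \<Rightarrow> 'a set" where
 "Cset X v i \<mu> = {x\<in>X. \<forall>j. (i j = -1 \<longrightarrow> v j \<bullet> x \<le> \<mu>$j) \<and> (i j = 1 \<longrightarrow> \<mu>$j \<le> v j \<bullet> x)}"

fun Qs :: "'a::euclidean_space set \<Rightarrow> (('l \<Rightarrow> int) \<Rightarrow> 'a \<Rightarrow> 'a) \<Rightarrow> (('l \<Rightarrow> int) \<Rightarrow> 'a)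
     \<Rightarrow> ('l \<Rightarrow> 'a) \<Rightarrow> ('l \<Rightarrow> int) list \<Rightarrow> real^'l::finite \<Rightarrow> 'a set" where
  "Qs X Lam b v [] \<mu> = UNIV"
| "Qs X Lam b v (i # \<alpha>) \<mu> = Cset X v i \<mu> \<inter> {x. phi Lam b i x \<in> Qs X Lam b v \<alpha> \<mu>}"

lemma sigma_conv:
  assumes "sigma v \<mu> x = i" "sigma v \<mu> y = i" "0 \<le> u" "0 \<le> w" "u + w = 1"
  shows "sigma v \<mu> (u *\<^sub>R x + w *\<^sub>R y) = i"
proof -
  have ix: "\<And>j. i j = (if v j \<bullet> x \<le> \<mu>$j then -1 else 1)" using assms(1)[symmetric] by (simp add: sigma_def)
  have iy: "\<And>j. i j = (if v j \<bullet> y \<le> \<mu>$j then -1 else 1)" using assms(2)[symmetric] by (simp add: sigma_def)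
  show ?thesis unfolding sigma_def
  proof (rule ext)
    fix j
    have lin: "v j \<bullet> (u *\<^sub>R x + w *\<^sub>R y) = u * (v j \<bullet> x) + w * (v j \<bullet> y)"
      by (simp add: inner_add_right)
    show "(if v j \<bullet> (u *\<^sub>R x + w *\<^sub>R y) \<le> \<mu> $ j then - 1 else 1) = i j"
    proof (cases "v j \<bullet> x \<le> \<mu>$j")
      case True
      then have "v j \<bullet> y \<le> \<mu>$j" using ix[of j] iy[of j] by (auto split: if_splits)
      then have "u * (v j \<bullet> x) + w * (v j \<bullet> y) \<le> u * \<mu>$j + w * \<mu>$j"
        using True assms(3,4) by (intro add_mono mult_left_mono) auto
      also have "\<dots> = \<mu>$j" using assms(5) by (metis distrib_right mult_1)
      finally show ?thesis using lin ix[of j] True by simp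
    next
      case False
      then have "\<not> v j \<bullet> y \<le> \<mu>$j" using ix[of j] iy[of j] by (auto split: if_splits)
      have "u * (v j \<bullet> x) + w * (v j \<bullet> y) > u * \<mu>$j + w * \<mu>$j"
      proof (cases "u > 0")
        case True
        then show ?thesis using False \<open>\<not> v j \<bullet> y \<le> \<mu>$j\<close> assms(4)
          by (intro add_less_le_mono mult_strict_left_mono mult_left_mono) auto
      next
        case False
        then have "w > 0" using assms by auto
        then show ?thesis using \<open>\<not> v j \<bullet> x \<le> \<mu>$j\<close> \<open>\<not> v j \<bullet> y \<le> \<mu>$j\<close> assms(3)
          by (intro add_le_less_mono mult_strict_left_mono mult_left_mono) auto
      qed
      moreover have "u * \<mu>$j + w * \<mu>$j = \<mu>$j" using assms(5) by (metis distrib_right mult_1)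
      ultimately show ?thesis using lin ix[of j] False by simp
    qed
  qed
qed

lemma convex_E:
  assumes "convex X"
  shows "convex {x\<in>X. sigma v \<mu> x = i}"
  using assms sigma_conv unfolding convex_def by blast

lemma E_closure:
  assumes X: "convex X" and p: "p \<in> X" "sigma v \<mu> p = i" and q: "q \<in> Cset X v i \<mu>"
  shows "q \<in> closure {x\<in>X. sigma v \<mu> x = i}"
proof -
  have ip: "\<And>j. i j = (if v j \<bullet> p \<le> \<mu>$j then -1 else 1)" using p(2)[symmetric] by (simp add: sigma_def)
  have mem: "q - s *\<^sub>R (q - p) \<in> {x\<in>X. sigma v \<mu> x = i}" if s: "0 < s" "s \<le> 1" for s
  proof -
    have eq: "q - s *\<^sub>R (q - p) = (1 - s) *\<^sub>R q + s *\<^sub>R p" by (simp add: algebra_simps)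
    have qX: "q \<in> X" using q by (simp add: Cset_def)
    have "(1 - s) *\<^sub>R q + s *\<^sub>R p \<in> X" using X qX p(1) s by (intro convexD) auto
    moreover have "sigma v \<mu> ((1 - s) *\<^sub>R q + s *\<^sub>R p) = i"
      unfolding sigma_def
    proof (rule ext)
      fix j
      have lin: "v j \<bullet> ((1 - s) *\<^sub>R q + s *\<^sub>R p) = (1 - s) * (v j \<bullet> q) + s * (v j \<bullet> p)"
        by (simp add: inner_add_right)
      have m: "(1 - s) * \<mu>$j + s * \<mu>$j = \<mu>$j" by (simp add: algebra_simps)
      show "(if v j \<bullet> ((1 - s) *\<^sub>R q + s *\<^sub>R p) \<le> \<mu> $ j then - 1 else 1) = i j"
      proof (cases "v j \<bullet> p \<le> \<mu>$j")
        case True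
        then have "i j = -1" using ip by simp
        then have "v j \<bullet> q \<le> \<mu>$j" using q by (simp add: Cset_def)
        then have "(1 - s) * (v j \<bullet> q) + s * (v j \<bullet> p) \<le> (1 - s) * \<mu>$j + s * \<mu>$j"
          using True s by (intro add_mono mult_left_mono) auto
        then show ?thesis using lin m \<open>i j = -1\<close> by simp
      next
        case False
        then have "i j = 1" using ip by simp
        then have "\<mu>$j \<le> v j \<bullet> q" using q by (simp add: Cset_def)
        then have "(1 - s) * (v j \<bullet> q) + s * (v j \<bullet> p) > (1 - s) * \<mu>$j + s * \<mu>$j"
          using False s by (intro add_le_less_mono mult_strict_left_mono mult_left_mono) auto
        then show ?thesis using lin m \<open>i j = 1\<close> by simp
      qed
    qed
    ultimately show ?thesis using eq by simp
  qed
  show ?thesis unfolding closure_approachable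
  proof (intro allI impI)
    fix e :: real assume e: "e > 0"
    define s where "s = min 1 (e / (norm (q - p) + 1))"
    have np: "norm (q - p) + 1 > 0" by (smt (verit) norm_ge_zero)
    have s0: "0 < s" "s \<le> 1" using e np by (auto simp: s_def)
    have "dist (q - s *\<^sub>R (q - p)) q = s * norm (q - p)" using s0 by (simp add: dist_norm)
    also have "\<dots> \<le> e / (norm (q - p) + 1) * norm (q - p)"
      by (intro mult_right_mono) (auto simp: s_def)
    also have "\<dots> < e" using e np
      by (simp add: divide_less_eq field_simps)
    finally show "\<exists>y\<in>{x \<in> X. sigma v \<mu> x = i}. dist y q < e" using mem[OF s0] by blast
  qed
qed

lemma Aset_sub_Cset: "Aset X v i \<mu> \<subseteq> Cset X v i \<mu>"
proof
  fix x assume "x \<in> Aset X v i \<mu>"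
  then have "x \<in> {x\<in>X. sigma v \<mu> x = i}" unfolding Aset_def using rel_interior_subset by blast
  then show "x \<in> Cset X v i \<mu>" unfolding Cset_def sigma_def by (auto split: if_splits)
qed

lemma cyl_sub_Qs: "cyl X Lam b v \<alpha> \<mu> \<subseteq> Qs X Lam b v \<alpha> \<mu>"
  apply (induction \<alpha>)
   apply simp
  using Aset_sub_Cset by fastforce

lemma cyl_sub_X: "\<alpha> \<noteq> [] \<Longrightarrow> cyl X Lam b v \<alpha> \<mu> \<subseteq> X"
  by (cases \<alpha>) (auto simp: Aset_def dest: rel_interior_subset[THEN subsetD])

lemma phi_shrink:
  assumes "linear (Lam i)"
  shows "phi Lam b i (q - s *\<^sub>R (q - p)) = phi Lam b i q - s *\<^sub>R (phi Lam b i q - phi Lam b i p)"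
proof -
  have "Lam i (q - s *\<^sub>R (q - p)) = Lam i q - s *\<^sub>R (Lam i q - Lam i p)"
    by (simp only: linear_diff[OF assms] linear_scale[OF assms])
  then show ?thesis by (simp add: phi_def algebra_simps)
qed

lemma phi_comb:
  assumes "linear (Lam i)"
  shows "phi Lam b i ((1 - t) *\<^sub>R x + t *\<^sub>R y) = (1 - t) *\<^sub>R phi Lam b i x + t *\<^sub>R phi Lam b i y"
proof -
  have "Lam i ((1 - t) *\<^sub>R x + t *\<^sub>R y) = (1 - t) *\<^sub>R Lam i x + t *\<^sub>R Lam i y"
    by (simp only: linear_add[OF assms] linear_scale[OF assms])
  then show ?thesis by (simp add: phi_def algebra_simps)
qed

lemma cyl_shrink:
  assumes X: "convex X" and lin: "\<And>i. i \<in> labels \<Longrightarrow> linear (Lam i)"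
  shows "set \<alpha> \<subseteq> labels \<Longrightarrow> p \<in> cyl X Lam b v \<alpha> \<mu> \<Longrightarrow> q \<in> Qs X Lam b v \<alpha> \<mu> \<Longrightarrow> 0 < s \<Longrightarrow> s \<le> 1
     \<Longrightarrow> q - s *\<^sub>R (q - p) \<in> cyl X Lam b v \<alpha> \<mu>"
proof (induction \<alpha> arbitrary: p q)
  case Nil
  then show ?case by simp
next
  case (Cons i \<alpha>)
  have li: "linear (Lam i)" using Cons.prems lin by auto
  have pA: "p \<in> Aset X v i \<mu>" and pc: "phi Lam b i p \<in> cyl X Lam b v \<alpha> \<mu>" using Cons.prems by auto
  have qC: "q \<in> Cset X v i \<mu>" and qc: "phi Lam b i q \<in> Qs X Lam b v \<alpha> \<mu>" using Cons.prems by auto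
  have qX: "q \<in> X" using qC by (simp add: Cset_def)
  have pRX: "p \<in> rel_interior X" and pRE: "p \<in> rel_interior {x\<in>X. sigma v \<mu> x = i}"
    using pA by (auto simp: Aset_def)
  have pE: "p \<in> {x\<in>X. sigma v \<mu> x = i}" using pRE rel_interior_subset by blast
  have 1: "q - s *\<^sub>R (q - p) \<in> rel_interior X"
    using rel_interior_closure_convex_shrink[OF X pRX, of q s] qX closure_subset Cons.prems by blast
  have 2: "q - s *\<^sub>R (q - p) \<in> rel_interior {x\<in>X. sigma v \<mu> x = i}"
    using rel_interior_closure_convex_shrink[OF convex_E[OF X] pRE, of q s] E_closure[OF X _ _ qC, of p] pE Cons.prems by blast
  have 3: "phi Lam b i (q - s *\<^sub>R (q - p)) \<in> cyl X Lam b v \<alpha> \<mu>"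
    unfolding phi_shrink[where Lam=Lam and i=i, OF li] using Cons.IH[OF _ pc qc] Cons.prems by auto
  show ?case using 1 2 3 by (simp add: Aset_def)
qed

lemma Qs_closure:
  assumes X: "convex X" and lin: "\<And>i. i \<in> labels \<Longrightarrow> linear (Lam i)"
    and lab: "set \<alpha> \<subseteq> labels" and ne: "cyl X Lam b v \<alpha> \<mu> \<noteq> {}"
  shows "Qs X Lam b v \<alpha> \<mu> \<subseteq> closure (cyl X Lam b v \<alpha> \<mu>)"
proof
  fix q assume q: "q \<in> Qs X Lam b v \<alpha> \<mu>"
  obtain p where p: "p \<in> cyl X Lam b v \<alpha> \<mu>" using ne by blast
  show "q \<in> closure (cyl X Lam b v \<alpha> \<mu>)" unfolding closure_approachable
  proof (intro allI impI)
    fix e :: real assume e: "e > 0"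
    define s where "s = min 1 (e / (norm (q - p) + 1))"
    have np: "norm (q - p) + 1 > 0" by (smt (verit) norm_ge_zero)
    have s0: "0 < s" "s \<le> 1" using e np by (auto simp: s_def)
    have "dist (q - s *\<^sub>R (q - p)) q = s * norm (q - p)" using s0 by (simp add: dist_norm)
    also have "\<dots> \<le> e / (norm (q - p) + 1) * norm (q - p)"
      by (intro mult_right_mono) (auto simp: s_def)
    also have "\<dots> < e" using e np
      by (simp add: divide_less_eq field_simps)
    finally show "\<exists>y\<in>cyl X Lam b v \<alpha> \<mu>. dist y q < e"
      using cyl_shrink[where Lam=Lam, OF X lin lab p q s0] by blast
  qed
qed

lemma Qs_convex:
  assumes X: "convex X" and lin: "\<And>i. i \<in> labels \<Longrightarrow> linear (Lam i)"
  shows "set \<alpha> \<subseteq> labels \<Longrightarrow> x \<in> Qs X Lam b v \<alpha> \<mu>1 \<Longrightarrow> y \<in> Qs X Lam b v \<alpha> \<mu>2 \<Longrightarrow> 0 \<le> t \<Longrightarrow> t \<le> 1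
     \<Longrightarrow> (1 - t) *\<^sub>R x + t *\<^sub>R y \<in> Qs X Lam b v \<alpha> ((1 - t) *\<^sub>R \<mu>1 + t *\<^sub>R \<mu>2)"
proof (induction \<alpha> arbitrary: x y)
  case Nil
  then show ?case by simp
next
  case (Cons i \<alpha>)
  have li: "linear (Lam i)" using Cons.prems lin by auto
  have xC: "x \<in> Cset X v i \<mu>1" and yC: "y \<in> Cset X v i \<mu>2" using Cons.prems by auto
  have "(1 - t) *\<^sub>R x + t *\<^sub>R y \<in> X" using xC yC Cons.prems X by (intro convexD) (auto simp: Cset_def)
  moreover have "(i j = -1 \<longrightarrow> v j \<bullet> ((1 - t) *\<^sub>R x + t *\<^sub>R y) \<le> ((1 - t) *\<^sub>R \<mu>1 + t *\<^sub>R \<mu>2)$j) \<and>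
     (i j = 1 \<longrightarrow> ((1 - t) *\<^sub>R \<mu>1 + t *\<^sub>R \<mu>2)$j \<le> v j \<bullet> ((1 - t) *\<^sub>R x + t *\<^sub>R y))" for j
  proof -
    have lin2: "v j \<bullet> ((1 - t) *\<^sub>R x + t *\<^sub>R y) = (1 - t) * (v j \<bullet> x) + t * (v j \<bullet> y)"
      by (simp add: inner_add_right)
    have m: "((1 - t) *\<^sub>R \<mu>1 + t *\<^sub>R \<mu>2)$j = (1 - t) * \<mu>1$j + t * \<mu>2$j" by simp
    show ?thesis
      using xC yC Cons.prems unfolding lin2 m Cset_def
      by (auto intro!: add_mono mult_left_mono)
  qed
  ultimately have "(1 - t) *\<^sub>R x + t *\<^sub>R y \<in> Cset X v i ((1 - t) *\<^sub>R \<mu>1 + t *\<^sub>R \<mu>2)"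
    by (simp add: Cset_def)
  moreover have "phi Lam b i ((1 - t) *\<^sub>R x + t *\<^sub>R y) \<in> Qs X Lam b v \<alpha> ((1 - t) *\<^sub>R \<mu>1 + t *\<^sub>R \<mu>2)"
    unfolding phi_comb[where Lam=Lam and i=i, OF li] using Cons.IH Cons.prems by auto
  ultimately show ?case by simp
qed

lemma infdist_closure_le:
  assumes "A \<noteq> {}" "z \<in> closure A"
  shows "infdist x A \<le> dist x z"
  using infdist_triangle[of x A z] in_closure_iff_infdist_zero[OF assms(1)] assms(2) by simp

lemma approach:
  assumes X: "convex X" and lin: "\<And>i. i \<in> labels \<Longrightarrow> linear (Lam i)"
    and lab: "set \<alpha> \<subseteq> labels"
    and a: "a \<in> cyl X Lam b v \<alpha> \<mu>a" and y: "y \<in> cyl X Lam b v \<alpha> \<mu>b"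
    and t: "0 \<le> t" "t \<le> 1" and ne: "cyl X Lam b v \<alpha> ((1 - t) *\<^sub>R \<mu>a + t *\<^sub>R \<mu>b) \<noteq> {}"
  shows "infdist a (cyl X Lam b v \<alpha> ((1 - t) *\<^sub>R \<mu>a + t *\<^sub>R \<mu>b)) \<le> t * dist a y"
proof -
  have "(1 - t) *\<^sub>R a + t *\<^sub>R y \<in> Qs X Lam b v \<alpha> ((1 - t) *\<^sub>R \<mu>a + t *\<^sub>R \<mu>b)"
    using Qs_convex[where Lam=Lam, OF X lin lab _ _ t] a y cyl_sub_Qs by blast
  then have "(1 - t) *\<^sub>R a + t *\<^sub>R y \<in> closure (cyl X Lam b v \<alpha> ((1 - t) *\<^sub>R \<mu>a + t *\<^sub>R \<mu>b))"
    using Qs_closure[where Lam=Lam, OF X lin lab ne] by blast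
  then have "infdist a (cyl X Lam b v \<alpha> ((1 - t) *\<^sub>R \<mu>a + t *\<^sub>R \<mu>b)) \<le> dist a ((1 - t) *\<^sub>R a + t *\<^sub>R y)"
    using infdist_closure_le[OF ne] by blast
  also have "dist a ((1 - t) *\<^sub>R a + t *\<^sub>R y) = norm (t *\<^sub>R (a - y))"
    by (simp add: dist_norm algebra_simps)
  also have "\<dots> = t * dist a y" using t by (simp add: dist_norm)
  finally show ?thesis .
qed

theorem lemma5p4:
  fixes X :: "'a::euclidean_space set"
    and Lam :: "('l::finite \<Rightarrow> int) \<Rightarrow> 'a \<Rightarrow> 'a"
    and b :: "('l \<Rightarrow> int) \<Rightarrow> 'a"
    and v :: "'l \<Rightarrow> 'a"
    and \<mu>s :: "real^'l"
    and n :: nat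
  assumes X_polytope: "polytope X"
    and Lam_linear: "\<And>i. i \<in> labels \<Longrightarrow> linear (Lam i)"
    and Lam_invertible: "\<And>i. i \<in> labels \<Longrightarrow> bij (Lam i)"
    and Lam_contr: "\<exists>N. is_norm_fun N \<and>
          (\<forall>i\<in>labels. \<exists>q<1. \<forall>x. N (Lam i x) \<le> q * N x)"
    and phi_into: "\<And>i. i \<in> labels \<Longrightarrow> phi Lam b i ` X \<subseteq> rel_interior X"
    and v_unit: "\<And>j. norm (v j) = 1"
    and mus_W1: "\<mu>s \<in> W1 X Lam b v"
    and n_pos: "n \<ge> 1"
  shows "\<forall>\<alpha>\<in>itineraries X Lam b v n \<mu>s. \<exists>c>0. \<exists>\<delta>>0. \<forall>\<mu>.
            norm (\<mu> - \<mu>s) < \<delta> \<and> norm (\<mu> - \<mu>s) < 1 \<longrightarrow>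
              \<alpha> \<in> itineraries X Lam b v n \<mu> \<and>
              hausdorff_dist (cyl X Lam b v \<alpha> \<mu>) (cyl X Lam b v \<alpha> \<mu>s) \<le> c * norm (\<mu> - \<mu>s)"
proof
  fix \<alpha> assume \<alpha>: "\<alpha> \<in> itineraries X Lam b v n \<mu>s"
  have len: "length \<alpha> = n" and lab: "set \<alpha> \<subseteq> labels" and ne0: "cyl X Lam b v \<alpha> \<mu>s \<noteq> {}"
    using \<alpha> by (auto simp: itineraries_def)
  have anil: "\<alpha> \<noteq> []" using len n_pos by auto
  have X: "convex X" using X_polytope polytope_imp_convex by blast
  note lin = Lam_linear
  have inZ: "\<mu>s \<in> Zset X Lam b v \<alpha>" using ne0 by (simp add: Zset_def)
  have "\<mu>s \<notin> frontier (Zset X Lam b v \<alpha>)"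
    using mus_W1 len lab n_pos unfolding W1_def by auto
  then have "\<mu>s \<in> interior (Zset X Lam b v \<alpha>)"
    using inZ closure_subset unfolding frontier_def by blast
  then obtain r where r: "r > 0" "ball \<mu>s r \<subseteq> Zset X Lam b v \<alpha>"
    using mem_interior by blast
  have neb: "cyl X Lam b v \<alpha> \<mu>' \<noteq> {}" if "norm (\<mu>' - \<mu>s) < r" for \<mu>'
  proof -
    have "\<mu>' \<in> ball \<mu>s r" using that by (simp add: dist_norm norm_minus_commute)
    then show ?thesis using r(2) by (auto simp: Zset_def)
  qed
  have "bounded X" using X_polytope polytope_imp_compact compact_imp_bounded by blast
  then obtain B where B: "\<And>x. x \<in> X \<Longrightarrow> norm x \<le> B" by (auto simp: bounded_iff)
  define D where "D = 2 * \<bar>B\<bar> + 1"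
  have D0: "D > 0" by (simp add: D_def)
  have DX: "dist x y \<le> D" if "x \<in> cyl X Lam b v \<alpha> \<mu>1" "y \<in> cyl X Lam b v \<alpha> \<mu>2" for x y \<mu>1 \<mu>2
  proof -
    have "x \<in> X" "y \<in> X" using that cyl_sub_X[OF anil] by blast+
    then have "norm x \<le> B" "norm y \<le> B" using B by auto
    then show ?thesis using norm_triangle_ineq4[of x y] by (simp add: dist_norm D_def)
  qed
  define c where "c = 2 * D / r"
  have c0: "c > 0" using D0 r by (simp add: c_def)
  show "\<exists>c>0. \<exists>\<delta>>0. \<forall>\<mu>.
            norm (\<mu> - \<mu>s) < \<delta> \<and> norm (\<mu> - \<mu>s) < 1 \<longrightarrow>
              \<alpha> \<in> itineraries X Lam b v n \<mu> \<and>
              hausdorff_dist (cyl X Lam b v \<alpha> \<mu>) (cyl X Lam b v \<alpha> \<mu>s) \<le> c * norm (\<mu> - \<mu>s)"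
  proof (rule exI[of _ c], rule conjI[OF c0], rule exI[of _ "r/2"], rule conjI)
    show "r / 2 > 0" using r by simp
  next
    show "\<forall>\<mu>. norm (\<mu> - \<mu>s) < r/2 \<and> norm (\<mu> - \<mu>s) < 1 \<longrightarrow>
              \<alpha> \<in> itineraries X Lam b v n \<mu> \<and>
              hausdorff_dist (cyl X Lam b v \<alpha> \<mu>) (cyl X Lam b v \<alpha> \<mu>s) \<le> c * norm (\<mu> - \<mu>s)"
  proof (intro allI impI)
    fix \<mu> assume "norm (\<mu> - \<mu>s) < r / 2 \<and> norm (\<mu> - \<mu>s) < 1"
    then have \<mu>: "norm (\<mu> - \<mu>s) < r / 2" by blast
    have ne: "cyl X Lam b v \<alpha> \<mu> \<noteq> {}" using neb \<mu> r by auto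
    have it: "\<alpha> \<in> itineraries X Lam b v n \<mu>" using len lab ne by (simp add: itineraries_def)
    define A where "A = cyl X Lam b v \<alpha> \<mu>"
    define As where "As = cyl X Lam b v \<alpha> \<mu>s"
    define \<epsilon> where "\<epsilon> = norm (\<mu> - \<mu>s)"
    have "hausdorff_dist (cyl X Lam b v \<alpha> \<mu>) (cyl X Lam b v \<alpha> \<mu>s) \<le> c * norm (\<mu> - \<mu>s)"
    proof (cases "\<epsilon> = 0")
      case True
      then have "\<mu> = \<mu>s" by (simp add: \<epsilon>_def)
      have "(SUP a\<in>As. infdist a As) = 0"
      proof -
        have "(SUP a\<in>As. infdist a As) = (SUP a\<in>As. (0::real))"
          by (intro SUP_cong) (auto simp: infdist_zero)
        then show ?thesis using ne0 by (simp add: As_def)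
      qed
      then show ?thesis using \<open>\<mu> = \<mu>s\<close> by (simp add: hausdorff_dist_def As_def)
    next
      case False
      then have e0: "\<epsilon> > 0" by (simp add: \<epsilon>_def)
      define t where "t = 2 * \<epsilon> / r"
      have t0: "0 < t" "t \<le> 1" using e0 r \<mu> by (auto simp: t_def \<epsilon>_def)
      have tD: "t * D = c * \<epsilon>" by (simp add: t_def c_def)
      define \<mu>1 where "\<mu>1 = \<mu>s + (1 / t) *\<^sub>R (\<mu> - \<mu>s)"
      have n1: "norm (\<mu>1 - \<mu>s) < r"
      proof -
        have "norm (\<mu>1 - \<mu>s) = (1/t) * \<epsilon>" using t0 by (simp add: \<mu>1_def \<epsilon>_def)
        also have "\<dots> = r / 2" using e0 r by (simp add: t_def)
        finally show ?thesis using r by simp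
      qed
      obtain y1 where y1: "y1 \<in> cyl X Lam b v \<alpha> \<mu>1" using neb[OF n1] by blast
      have eq1: "(1 - t) *\<^sub>R \<mu>s + t *\<^sub>R \<mu>1 = \<mu>"
        using t0 by (simp add: \<mu>1_def algebra_simps)
      have d1: "infdist a A \<le> c * \<epsilon>" if a: "a \<in> As" for a
      proof -
        have "infdist a A \<le> t * dist a y1"
          using approach[where Lam=Lam, OF X lin lab a[unfolded As_def] y1 less_imp_le[OF t0(1)] t0(2)] ne eq1
          by (simp add: A_def)
        also have "\<dots> \<le> t * D" using DX[OF a[unfolded As_def] y1] t0 by (simp add: mult_left_mono)
        finally show ?thesis using tD by simp
      qed
      define \<mu>2 where "\<mu>2 = \<mu>s - (1 / t) *\<^sub>R (\<mu> - \<mu>s)"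
      have n2: "norm (\<mu>2 - \<mu>s) < r"
      proof -
        have "norm (\<mu>2 - \<mu>s) = (1/t) * \<epsilon>" using t0 by (simp add: \<mu>2_def \<epsilon>_def)
        also have "\<dots> = r / 2" using e0 r by (simp add: t_def)
        finally show ?thesis using r by simp
      qed
      obtain y2 where y2: "y2 \<in> cyl X Lam b v \<alpha> \<mu>2" using neb[OF n2] by blast
      define s where "s = t / (1 + t)"
      have s0: "0 \<le> s" "s \<le> 1" "s \<le> t" using t0 by (auto simp: s_def field_simps)
      have eq2: "(1 - s) *\<^sub>R \<mu> + s *\<^sub>R \<mu>2 = \<mu>s"
      proof -
        have "(1 - s) *\<^sub>R \<mu> + s *\<^sub>R \<mu>2 = \<mu>s + (1 - s - s / t) *\<^sub>R (\<mu> - \<mu>s)"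
          by (simp add: \<mu>2_def algebra_simps)
        also have "1 - s - s / t = 0"
        proof -
          have "t + t * t > 0" using t0 by (simp add: add_pos_pos)
          then show ?thesis using t0 by (simp add: s_def field_simps)
        qed
        finally show ?thesis by simp
      qed
      have d2: "infdist a As \<le> c * \<epsilon>" if a: "a \<in> A" for a
      proof -
        have "infdist a As \<le> s * dist a y2"
          using approach[where Lam=Lam, OF X lin lab a[unfolded A_def] y2 s0(1,2)] ne0 eq2
          by (simp add: As_def)
        also have "\<dots> \<le> t * D" using DX[OF a[unfolded A_def] y2] s0 zero_le_dist[of a y2] D0
          by (meson mult_mono order_trans)
        finally show ?thesis using tD by simp
      qed
      have "(SUP a\<in>A. infdist a As) \<le> c * \<epsilon>"
        using ne d2 by (intro cSUP_least) (auto simp: A_def)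
      moreover have "(SUP a\<in>As. infdist a A) \<le> c * \<epsilon>"
        using ne0 d1 by (intro cSUP_least) (auto simp: As_def)
      ultimately show ?thesis by (simp add: hausdorff_dist_def A_def As_def \<epsilon>_def)
    qed
    then show "\<alpha> \<in> itineraries X Lam b v n \<mu> \<and>
              hausdorff_dist (cyl X Lam b v \<alpha> \<mu>) (cyl X Lam b v \<alpha> \<mu>s) \<le> c * norm (\<mu> - \<mu>s)"
      using it by blast
  qed
  qed
qed

end
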